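(* Let $F$ be a field of characteristic $0$, $d\ge1$, let $\lambda=(h_1,\dots,h_n)\vdash k$, let $\sigma\in S_n$, and let $\sigma(\lambda)=(\mu_1,\dots,\mu_l)\vdash k$. Let $G:=ST(\lambda)(x_1,\dots,x_k)$, evaluated at $x_1,\dots,x_k\in M_d(F)$, viewed as an element of $M_d(F)^{\otimes n}=\mathrm{End}((F^d)^{\otimes n})$. If some $\mu_i$ is even or the $\mu_i$ are not pairwise distinct, then $\mathrm{tr}(\sigma G)=0$ for all $x_1,\dots,x_k$. Otherwise there is a sign $\pm$ (independent of the $x_i$) such that, as functions of $(x_1,\dots,x_k)\in M_d(F)^k$, $$\mathrm{tr}(\sigma G)=\pm\,T_{\mu_1}\wedge\cdots\wedge T_{\mu_l}.$$
   Context: $ST(\lambda)$: for a partition $\lambda=(h_1,\dots,h_n)\vdash k$, set $X_j:=x_{h_1+\dots+h_{j-1}+1}\cdots x_{h_1+\dots+h_j}$ and $ST(\lambda)(x_1,\dots,x_k):=\sum_{\tau\in S_k}\epsilon_\tau (X_1\otimes\cdots\otimes X_n)(x_{\tau(1)},\dots,x_{\tau(k)})$, the alternation of $X_1\otimes\cdots\otimes X_n$ over $x_1,\dots,x_k$. $S_n$ acts on $(F^d)^{\otimes n}$ by permuting tensor factors, normalized so that $\mathrm{tr}((m,m-1,\dots,1)\,y_1\otimes\cdots\otimes y_m)=\mathrm{tr}(y_1y_2\cdots y_m)$. For $\sigma\in S_n$ with cycle decomposition $c_1\cdots c_l$ (fixed points included as $1$-cycles), $\sigma(\lambda)$ is the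 partition $(\sum_{i\in c_1}h_i,\dots,\sum_{i\in c_l}h_i)$ arranged non-increasingly. $T_j(y_1,\dots,y_j):=\mathrm{tr}\big(\sum_{\tau\in S_j}\epsilon_\tau y_{\tau(1)}\cdots y_{\tau(j)}\big)$. For multilinear alternating functions $f$ in $h$ variables and $g$ in $m$ variables, $(f\wedge g)(x_1,\dots,x_{h+m}):=\frac{1}{h!m!}\sum_{\tau\in S_{h+m}}\epsilon_\tau f(x_{\tau(1)},\dots,x_{\tau(h)})g(x_{\tau(h+1)},\dots,x_{\tau(h+m)})$ (associative). *)

theory Defs
  imports "HOL-Analysis.Analysis" "HOL-Combinatorics.Permutations" "HOL-Combinatorics.Orbits"
          "HOL-Library.Multiset"
begin

text \<open>Matrices M_d(F) are 'a^'d^'d with 'd a finite type (d = CARD('d) \<ge> 1).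
  Indices are 0-based: x 0, ..., x (k-1) stand for x_1, ..., x_k.\<close>

definition mtrace :: "'a::semiring_1^'d^'d \<Rightarrow> 'a" where
  "mtrace A = (\<Sum>i\<in>UNIV. A $ i $ i)"

definition mprod_list :: "('a::semiring_1^'d^'d) list \<Rightarrow> 'a^'d^'d" where
  "mprod_list As = foldr (**) As (mat 1)"

text \<open>Basis of (F^d)^{\<otimes>n}: multi-indices {..<n} \<rightarrow> 'd.\<close>
definition midx :: "nat \<Rightarrow> (nat \<Rightarrow> 'd) set" where
  "midx n = PiE {..<n} (\<lambda>_. UNIV)"

text \<open>Elements of End((F^d)^{\<otimes>n}) as matrices indexed by multi-indices.
  Tensor product y_1 \<otimes> ... \<otimes> y_n of matrices.\<close>
definition tensor_mats :: "nat \<Rightarrow> (nat \<Rightarrow> 'a::comm_semiring_1^'d^'d)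
    \<Rightarrow> (nat \<Rightarrow> 'd) \<Rightarrow> (nat \<Rightarrow> 'd) \<Rightarrow> 'a" where
  "tensor_mats n ys r s = (\<Prod>j<n. ys j $ r j $ s j)"

text \<open>Action of \<sigma> \<in> S_n on (F^d)^{\<otimes>n} permuting tensor factors:
  v_1 \<otimes> ... \<otimes> v_n \<mapsto> v_{\<sigma>^{-1}(1)} \<otimes> ... \<otimes> v_{\<sigma>^{-1}(n)}, i.e. e_s \<mapsto> e_{s \<circ> \<sigma>^{-1}}.
  With this convention tr((m,m-1,...,1) y_1\<otimes>...\<otimes>y_m) = tr(y_1 y_2 ... y_m).\<close>
definition perm_op :: "nat \<Rightarrow> (nat \<Rightarrow> nat) \<Rightarrow> (nat \<Rightarrow> 'd) \<Rightarrow> (nat \<Rightarrow> 'd) \<Rightarrow> 'a::zero_neq_one" where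
  "perm_op n \<sigma> r s = (if r = restrict (\<lambda>j. s (inv \<sigma> j)) {..<n} then 1 else 0)"

definition tr_perm :: "nat \<Rightarrow> (nat \<Rightarrow> nat) \<Rightarrow> ((nat \<Rightarrow> 'd::finite) \<Rightarrow> (nat \<Rightarrow> 'd) \<Rightarrow> 'a::comm_ring_1) \<Rightarrow> 'a" where
  "tr_perm n \<sigma> A = (\<Sum>r\<in>midx n. \<Sum>s\<in>midx n. perm_op n \<sigma> r s * A s r)"

text \<open>Partition \<lambda> = (h_1,...,h_n) as a list h; X_j = x_{h_1+..+h_{j-1}+1} ... x_{h_1+..+h_j}.\<close>
definition Xblock :: "nat list \<Rightarrow> nat \<Rightarrow> (nat \<Rightarrow> 'a::semiring_1^'d^'d) \<Rightarrow> 'a^'d^'d" where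
  "Xblock h j x = mprod_list (map x [sum_list (take j h) ..< sum_list (take (Suc j) h)])"

definition ST :: "nat list \<Rightarrow> (nat \<Rightarrow> 'a::comm_ring_1^'d^'d) \<Rightarrow> (nat \<Rightarrow> 'd) \<Rightarrow> (nat \<Rightarrow> 'd) \<Rightarrow> 'a" where
  "ST h x r s = (\<Sum>\<tau> | \<tau> permutes {..<sum_list h}.
      of_int (sign \<tau>) * tensor_mats (length h) (\<lambda>j. Xblock h j (\<lambda>i. x (\<tau> i))) r s)"

text \<open>\<sigma>(\<lambda>) as a multiset: sums of h over the cycles (orbits, fixed points included) of \<sigma>.\<close>
definition cycle_partition :: "nat list \<Rightarrow> (nat \<Rightarrow> nat) \<Rightarrow> nat multiset" where
  "cycle_partition h \<sigma> =
     image_mset (\<lambda>C. \<Sum>i\<in>C. h ! i) (mset_set ((\<lambda>i. orbit \<sigma> i) ` {..<length h}))"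

definition msmult :: "'a::times \<Rightarrow> 'a^'d^'d \<Rightarrow> 'a^'d^'d" where
  "msmult c A = (\<chi> i j. c * A $ i $ j)"

definition Tfun :: "nat \<Rightarrow> (nat \<Rightarrow> 'a::comm_ring_1^'d^'d) \<Rightarrow> 'a" where
  "Tfun j y = mtrace (\<Sum>\<tau> | \<tau> permutes {..<j}.
      msmult (of_int (sign \<tau>)) (mprod_list (map (\<lambda>i. y (\<tau> i)) [0..<j])))"

definition wedge :: "((nat \<Rightarrow> 'm) \<Rightarrow> 'a::field_char_0) \<Rightarrow> nat \<Rightarrow> ((nat \<Rightarrow> 'm) \<Rightarrow> 'a) \<Rightarrow> nat
    \<Rightarrow> (nat \<Rightarrow> 'm) \<Rightarrow> 'a" where
  "wedge f a g b x = (1 / (fact a * fact b)) *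
     (\<Sum>\<tau> | \<tau> permutes {..<a + b}.
        of_int (sign \<tau>) * f (\<lambda>i. x (\<tau> i)) * g (\<lambda>i. x (\<tau> (a + i))))"

text \<open>T_{\<mu>_1} \<wedge> ... \<wedge> T_{\<mu>_l} (bracketed to the right; \<wedge> is associative).\<close>
fun wedgeT :: "nat list \<Rightarrow> (nat \<Rightarrow> 'a::field_char_0^'d^'d) \<Rightarrow> 'a" where
  "wedgeT [] = (\<lambda>x. 1)"
| "wedgeT (m # ms) = wedge (Tfun m) m (wedgeT ms) (sum_list ms)"

end

theory Submission
  imports Defs "HOL-Combinatorics.Cycles"
begin

definition Gs :: "nat set \<Rightarrow> (nat \<Rightarrow> nat) \<Rightarrow> (nat \<Rightarrow> 'a::comm_ring_1^'d::finite^'d) \<Rightarrow> 'a" where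
  "Gs I \<tau> Y = (\<Sum>s\<in>PiE I (\<lambda>_. UNIV). \<Prod>j\<in>I. Y j $ s j $ s (\<tau> j))"

lemma sum_PiE_insert:
  fixes F :: "('x \<Rightarrow> 'y) \<Rightarrow> 'c::comm_monoid_add"
  assumes "x \<notin> S"
  shows "(\<Sum>g\<in>PiE (insert x S) T. F g) = (\<Sum>y\<in>T x. \<Sum>g\<in>PiE S T. F (g(x:=y)))"
proof -
  have "(\<Sum>g\<in>PiE (insert x S) T. F g) = (\<Sum>(y,g)\<in>T x \<times> PiE S T. F (g(x:=y)))"
    using assms
    by (intro sum.reindex_bij_witness[of _ "\<lambda>(y,g). g(x := y)" "\<lambda>g. (g x, g(x := undefined))"])
       (auto simp: PiE_def extensional_def)
  also have "\<dots> = (\<Sum>y\<in>T x. \<Sum>g\<in>PiE S T. F (g(x:=y)))"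
    by (subst sum.cartesian_product) auto
  finally show ?thesis .
qed

lemma Gs_cong:
  assumes "\<And>j. j \<in> I \<Longrightarrow> \<tau> j = \<tau>' j" "\<And>j. j \<in> I \<Longrightarrow> Y j = Y' j"
  shows "Gs I \<tau> Y = Gs I \<tau>' Y'"
  unfolding Gs_def using assms by (intro sum.cong prod.cong) auto

lemma Gs_fix:
  assumes fin: "finite I" and b: "b \<in> I" "\<tau> b = b" and inv: "\<And>j. j \<in> I - {b} \<Longrightarrow> \<tau> j \<in> I - {b}"
  shows "Gs I \<tau> Y = mtrace (Y b) * Gs (I - {b}) \<tau> Y"
proof -
  define I' where "I' = I - {b}"
  have I: "I = insert b I'" "b \<notin> I'" "finite I'" using b fin by (auto simp: I'_def)
  have "Gs I \<tau> Y = (\<Sum>v\<in>UNIV. \<Sum>s\<in>PiE I' (\<lambda>_. UNIV).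
        \<Prod>j\<in>insert b I'. Y j $ (s(b:=v)) j $ (s(b:=v)) (\<tau> j))"
    unfolding Gs_def I(1) using I(2) by (rule sum_PiE_insert)
  also have "\<dots> = (\<Sum>v\<in>UNIV. \<Sum>s\<in>PiE I' (\<lambda>_. UNIV).
        Y b $ v $ v * (\<Prod>j\<in>I'. Y j $ s j $ s (\<tau> j)))"
  proof (intro sum.cong refl)
    fix v s
    have "(\<Prod>j\<in>I'. Y j $ (s(b:=v)) j $ (s(b:=v)) (\<tau> j)) = (\<Prod>j\<in>I'. Y j $ s j $ s (\<tau> j))"
    proof (intro prod.cong refl)
      fix j assume j: "j \<in> I'"
      then have "\<tau> j \<in> I'" using inv I'_def by auto
      then show "Y j $ (s(b:=v)) j $ (s(b:=v)) (\<tau> j) = Y j $ s j $ s (\<tau> j)"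
        using j I(2) by (metis fun_upd_other)
    qed
    then show "(\<Prod>j\<in>insert b I'. Y j $ (s(b:=v)) j $ (s(b:=v)) (\<tau> j)) =
        Y b $ v $ v * (\<Prod>j\<in>I'. Y j $ s j $ s (\<tau> j))"
      using I b by (simp add: prod.insert)
  qed
  also have "\<dots> = mtrace (Y b) * Gs I' \<tau> Y"
    unfolding Gs_def mtrace_def by (subst sum.swap) (simp add: sum_distrib_left sum_distrib_right)
  finally show ?thesis unfolding I'_def .
qed

lemma Gs_merge:
  assumes fin: "finite I" and ab: "a \<in> I" "b \<in> I" "a \<noteq> b" "\<tau> a = b" "\<tau> b \<in> I - {b}"
    and inv: "\<And>j. j \<in> I - {a, b} \<Longrightarrow> \<tau> j \<in> I - {b}"
  shows "Gs I \<tau> Y = Gs (I - {b}) (\<tau>(a := \<tau> b)) (Y(a := Y a ** Y b))"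
proof -
  define I' where "I' = I - {b}"
  have I: "I = insert b I'" "b \<notin> I'" "finite I'" "a \<in> I'" using ab fin by (auto simp: I'_def)
  have "Gs I \<tau> Y = (\<Sum>v\<in>UNIV. \<Sum>s\<in>PiE I' (\<lambda>_. UNIV).
        \<Prod>j\<in>insert b I'. Y j $ (s(b:=v)) j $ (s(b:=v)) (\<tau> j))"
    unfolding Gs_def I(1) using I(2) by (rule sum_PiE_insert)
  also have "\<dots> = (\<Sum>v\<in>UNIV. \<Sum>s\<in>PiE I' (\<lambda>_. UNIV).
        (Y a $ s a $ v * Y b $ v $ s (\<tau> b)) * (\<Prod>j\<in>I'-{a}. Y j $ s j $ s (\<tau> j)))"
  proof (intro sum.cong refl)
    fix v s
    have "(\<Prod>j\<in>I'-{a}. Y j $ (s(b:=v)) j $ (s(b:=v)) (\<tau> j)) = (\<Prod>j\<in>I'-{a}. Y j $ s j $ s (\<tau> j))"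
    proof (intro prod.cong refl)
      fix j assume j: "j \<in> I'-{a}"
      then have "\<tau> j \<in> I'" using inv I'_def by auto
      then show "Y j $ (s(b:=v)) j $ (s(b:=v)) (\<tau> j) = Y j $ s j $ s (\<tau> j)"
        using j I(2) by (metis fun_upd_other DiffD1)
    qed
    moreover have "(\<Prod>j\<in>insert b I'. Y j $ (s(b:=v)) j $ (s(b:=v)) (\<tau> j)) =
        Y b $ v $ (s(b:=v)) (\<tau> b) * (Y a $ (s(b:=v)) a $ (s(b:=v)) (\<tau> a) *
         (\<Prod>j\<in>I'-{a}. Y j $ (s(b:=v)) j $ (s(b:=v)) (\<tau> j)))"
      using I by (simp add: prod.insert prod.remove[of I' a])
    moreover have "(s(b:=v)) (\<tau> b) = s (\<tau> b)" using ab by auto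
    moreover have "(s(b:=v)) a = s a" using ab by auto
    ultimately show "(\<Prod>j\<in>insert b I'. Y j $ (s(b:=v)) j $ (s(b:=v)) (\<tau> j)) =
        (Y a $ s a $ v * Y b $ v $ s (\<tau> b)) * (\<Prod>j\<in>I'-{a}. Y j $ s j $ s (\<tau> j))"
      using ab by (simp add: mult_ac)
  qed
  also have "\<dots> = (\<Sum>s\<in>PiE I' (\<lambda>_. UNIV).
        (Y a ** Y b) $ s a $ s (\<tau> b) * (\<Prod>j\<in>I'-{a}. Y j $ s j $ s (\<tau> j)))"
    by (subst sum.swap) (simp add: matrix_matrix_mult_def sum_distrib_right)
  also have "\<dots> = Gs I' (\<tau>(a := \<tau> b)) (Y(a := Y a ** Y b))"
    unfolding Gs_def
  proof (intro sum.cong refl)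
    fix s
    have "(\<Prod>j\<in>I'. (Y(a := Y a ** Y b)) j $ s j $ s ((\<tau>(a := \<tau> b)) j)) =
       (Y a ** Y b) $ s a $ s (\<tau> b) * (\<Prod>j\<in>I'-{a}. (Y(a := Y a ** Y b)) j $ s j $ s ((\<tau>(a := \<tau> b)) j))"
      using I by (simp add: prod.remove[of I' a])
    also have "(\<Prod>j\<in>I'-{a}. (Y(a := Y a ** Y b)) j $ s j $ s ((\<tau>(a := \<tau> b)) j)) =
        (\<Prod>j\<in>I'-{a}. Y j $ s j $ s (\<tau> j))"
      by (intro prod.cong) auto
    finally show "(Y a ** Y b) $ s a $ s (\<tau> b) * (\<Prod>j\<in>I'-{a}. Y j $ s j $ s (\<tau> j)) =
       (\<Prod>j\<in>I'. (Y(a := Y a ** Y b)) j $ s j $ s ((\<tau>(a := \<tau> b)) j))" by simp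
  qed
  finally show ?thesis unfolding I'_def .
qed

lemma mprod_list_Cons: "mprod_list (A # As) = A ** mprod_list As"
  by (simp add: mprod_list_def)

lemma mprod_list_Nil: "mprod_list [] = mat 1"
  by (simp add: mprod_list_def)

lemma mprod_list_append: "mprod_list (As @ Bs) = mprod_list As ** mprod_list Bs"
  by (induction As) (simp_all add: mprod_list_Cons mprod_list_Nil matrix_mul_assoc)

lemma Gs_cycle:
  assumes "finite S" "distinct cs" "cs \<noteq> []" "set cs \<subseteq> S" "map \<tau> cs = rotate1 cs"
    "\<And>j. j \<in> S - set cs \<Longrightarrow> \<tau> j \<in> S - set cs"
  shows "Gs S \<tau> Y = mtrace (mprod_list (map Y cs)) * Gs (S - set cs) \<tau> Y"
  using assms
proof (induction "length cs" arbitrary: cs S \<tau> Y rule: less_induct)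
  case less
  then obtain c0 cs' where cs: "cs = c0 # cs'" by (cases cs) auto
  show ?case
  proof (cases cs')
    case Nil
    with less cs have "\<tau> c0 = c0" by simp
    then show ?thesis using less cs Nil
      by (subst Gs_fix[of S c0]) (auto simp: mprod_list_Cons mprod_list_Nil)
  next
    case (Cons c1 rest)
    have cs2: "cs = c0 # c1 # rest" using cs Cons by simp
    have t0: "\<tau> c0 = c1" and tr: "map \<tau> (c1 # rest) = rest @ [c0]"
      using less.prems(5) unfolding cs2 by auto
    have dist: "c0 \<noteq> c1" "c0 \<notin> set rest" "c1 \<notin> set rest" "distinct rest"
      using less.prems(2) unfolding cs2 by auto
    have img: "\<tau> ` set (c1 # rest) = set (rest @ [c0])"
      using tr by (metis list.set_map)
    have t1: "\<tau> c1 \<in> S - {c1}"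
    proof -
      have "\<tau> c1 \<in> set (rest @ [c0])" using img by auto
      then show ?thesis using dist less.prems(4) cs2 by auto
    qed
    have G1: "Gs S \<tau> Y = Gs (S - {c1}) (\<tau>(c0 := \<tau> c1)) (Y(c0 := Y c0 ** Y c1))"
    proof (rule Gs_merge)
      show "finite S" using less by simp
      show "c0 \<in> S" "c1 \<in> S" using less.prems(4) cs2 by auto
      show "c0 \<noteq> c1" "\<tau> c0 = c1" "\<tau> c1 \<in> S - {c1}" using dist t0 t1 by auto
      fix j assume j: "j \<in> S - {c0, c1}"
      show "\<tau> j \<in> S - {c1}"
      proof (cases "j \<in> set rest")
        case True
        then have "\<tau> j \<in> set (rest @ [c0])" using img by auto
        then show ?thesis using dist less.prems(4) cs2 by auto
      next
        case False
        then have "j \<in> S - set cs" using j cs2 by auto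
        then show ?thesis using less.prems(6) cs2 by auto
      qed
    qed
    define \<tau>' where "\<tau>' = \<tau>(c0 := \<tau> c1)"
    define Y' where "Y' = Y(c0 := Y c0 ** Y c1)"
    have IH: "Gs (S - {c1}) \<tau>' Y' = mtrace (mprod_list (map Y' (c0 # rest))) *
        Gs ((S - {c1}) - set (c0 # rest)) \<tau>' Y'"
    proof (rule less.hyps)
      show "length (c0 # rest) < length cs" using cs2 by simp
      show "finite (S - {c1})" using less by simp
      show "distinct (c0 # rest)" using dist by simp
      show "c0 # rest \<noteq> []" by simp
      show "set (c0 # rest) \<subseteq> S - {c1}" using less.prems(4) cs2 dist by auto
      have "map \<tau>' rest = map \<tau> rest" unfolding \<tau>'_def using dist by (intro map_cong) auto
      moreover have "\<tau>' c0 = \<tau> c1" unfolding \<tau>'_def by simp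
      ultimately have H: "map \<tau>' (c0 # rest) = map \<tau> (c1 # rest)" by simp
      show "map \<tau>' (c0 # rest) = rotate1 (c0 # rest)"
        by (simp only: H tr rotate1.simps)
      fix j assume j: "j \<in> S - {c1} - set (c0 # rest)"
      then have "j \<in> S - set cs" "j \<noteq> c0" using cs2 by auto
      then show "\<tau>' j \<in> S - {c1} - set (c0 # rest)"
        using less.prems(6) cs2 unfolding \<tau>'_def by auto
    qed
    have e1: "(S - {c1}) - set (c0 # rest) = S - set cs" using cs2 by auto
    have e2: "Gs (S - set cs) \<tau>' Y' = Gs (S - set cs) \<tau> Y"
      by (rule Gs_cong) (auto simp: \<tau>'_def Y'_def cs2)
    have e3: "map Y' rest = map Y rest" unfolding Y'_def using dist by (intro map_cong) auto
    have "mprod_list (map Y' (c0 # rest)) = Y' c0 ** mprod_list (map Y' rest)"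
      by (simp add: mprod_list_Cons)
    also have "\<dots> = (Y c0 ** Y c1) ** mprod_list (map Y rest)"
      by (simp only: e3) (simp add: Y'_def)
    also have "\<dots> = mprod_list (map Y cs)"
      by (simp add: cs2 mprod_list_Cons matrix_mul_assoc)
    finally have e4: "mprod_list (map Y' (c0 # rest)) = mprod_list (map Y cs)" .
    show ?thesis using G1 IH e1 e2 e4 unfolding \<tau>'_def[symmetric] Y'_def[symmetric] by simp
  qed
qed

lemma support_rotate:
  assumes "permutation \<tau>"
  shows "map \<tau> (support \<tau> s) = rotate1 (support \<tau> s)"
proof -
  define L where "L = least_power \<tau> s"
  have L: "L > 0" "(\<tau> ^^ L) s = s" using least_power_of_permutation[OF assms] L_def by auto
  define f where "f i = (\<tau> ^^ i) s" for i
  have sL: "support \<tau> s = map f [0..<L]" unfolding f_def L_def by (rule refl)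
  have u: "[0..<L] = 0 # [1..<L]" using L by (simp add: upt_conv_Cons)
  have cs: "support \<tau> s = s # map f [1..<L]" unfolding sL by (subst u) (simp add: f_def)
  have "map \<tau> (support \<tau> s) = map (\<lambda>i. f (Suc i)) [0..<L]"
    unfolding sL by (simp add: f_def)
  also have "\<dots> = map f (map Suc [0..<L])" by simp
  also have "map Suc [0..<L] = [1..<L] @ [L]" using L
    by (simp add: map_Suc_upt)
  also have "map f ([1..<L] @ [L]) = map f [1..<L] @ [s]" using L by (simp add: f_def)
  finally show ?thesis using cs by simp
qed

lemma Gs_decomp:
  assumes "finite S" "permutation \<tau>" "\<tau> ` S \<subseteq> S"
  shows "\<exists>css. (\<forall>Y::nat \<Rightarrow> 'a::comm_ring_1^'d::finite^'d.
            Gs S \<tau> Y = prod_list (map (\<lambda>cs. mtrace (mprod_list (map Y cs))) css))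
          \<and> distinct (concat css) \<and> set (concat css) = S \<and> (\<forall>cs\<in>set css. cs \<noteq> [])
          \<and> mset (map set css) = mset_set ((\<lambda>i. orbit \<tau> i) ` S)"
  using assms
proof (induction "card S" arbitrary: S rule: less_induct)
  case less
  show ?case
  proof (cases "S = {}")
    case True
    then show ?thesis by (intro exI[of _ "[]"]) (auto simp: Gs_def)
  next
    case False
    then obtain s where s: "s \<in> S" by blast
    define cs where "cs = support \<tau> s"
    have perm: "permutation \<tau>" by fact
    have dcs: "distinct cs" unfolding cs_def by (rule cycle_of_permutation[OF perm])
    have ne: "cs \<noteq> []" unfolding cs_def using least_power_of_permutation(2)[OF perm, of s] by simp
    have scs: "set cs = orbit \<tau> s"
      unfolding cs_def support_set[OF perm] orbit_altdef_permutation[OF perm] by auto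
    have pw: "(\<tau> ^^ i) s \<in> S" for i
      by (induction i) (use s less.prems(3) in auto)
    have sub: "set cs \<subseteq> S" unfolding cs_def by (auto intro: pw)
    have rot: "map \<tau> cs = rotate1 cs" unfolding cs_def by (rule support_rotate[OF perm])
    have orb_eq: "orbit \<tau> y = orbit \<tau> s" if "y \<in> orbit \<tau> s" for y
      by (rule orbit_cyclic_eq3[OF cyclic_on_orbit'[OF perm] that])
    have self: "y \<in> orbit \<tau> y" for y by (rule permutation_self_in_orbit[OF perm])
    have inv: "\<tau> j \<in> S - set cs" if "j \<in> S - set cs" for j
    proof -
      have "\<tau> j \<in> S" using that less.prems(3) by auto
      moreover have "\<tau> j \<notin> orbit \<tau> s"
      proof
        assume "\<tau> j \<in> orbit \<tau> s"
        then have "orbit \<tau> (\<tau> j) = orbit \<tau> s" by (rule orb_eq)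
        then have "orbit \<tau> j = orbit \<tau> s" using permutation_orbit_step[OF perm] by simp
        then show False using self[of j] that scs by auto
      qed
      ultimately show ?thesis using scs by auto
    qed
    define S' where "S' = S - set cs"
    have sS: "s \<in> set cs" using scs self by auto
    have cardS': "card S' < card S" unfolding S'_def using sS s less.prems(1)
      by (intro psubset_card_mono) auto
    have "\<exists>css. (\<forall>Y::nat \<Rightarrow> 'a::comm_ring_1^'d::finite^'d.
            Gs S' \<tau> Y = prod_list (map (\<lambda>cs. mtrace (mprod_list (map Y cs))) css))
          \<and> distinct (concat css) \<and> set (concat css) = S' \<and> (\<forall>cs\<in>set css. cs \<noteq> [])
          \<and> mset (map set css) = mset_set ((\<lambda>i. orbit \<tau> i) ` S')"
      using cardS' less.prems inv unfolding S'_def by (intro less.hyps) auto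
    then obtain css where css: "\<forall>Y::nat \<Rightarrow> 'a::comm_ring_1^'d::finite^'d.
            Gs S' \<tau> Y = prod_list (map (\<lambda>cs. mtrace (mprod_list (map Y cs))) css)"
          "distinct (concat css)" "set (concat css) = S'" "\<forall>cs\<in>set css. cs \<noteq> []"
          "mset (map set css) = mset_set ((\<lambda>i. orbit \<tau> i) ` S')" by blast
    show ?thesis
    proof (intro exI[of _ "cs # css"] conjI allI)
      fix Y :: "nat \<Rightarrow> 'a::comm_ring_1^'d::finite^'d"
      have "Gs S \<tau> Y = mtrace (mprod_list (map Y cs)) * Gs S' \<tau> Y"
        unfolding S'_def using less.prems(1) dcs ne sub rot inv by (rule Gs_cycle)
      then show "Gs S \<tau> Y = prod_list (map (\<lambda>cs. mtrace (mprod_list (map Y cs))) (cs # css))"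
        using css(1) by simp
    next
      show "distinct (concat (cs # css))" using dcs css(2,3) unfolding S'_def by auto
    next
      show "set (concat (cs # css)) = S" using css(3) sub unfolding S'_def by auto
    next
      show "\<forall>c\<in>set (cs # css). c \<noteq> []" using ne css(4) by auto
    next
      have img: "(\<lambda>i. orbit \<tau> i) ` S = insert (orbit \<tau> s) ((\<lambda>i. orbit \<tau> i) ` S')"
      proof -
        have "S = set cs \<union> S'" using sub unfolding S'_def by auto
        moreover have "(\<lambda>i. orbit \<tau> i) ` set cs = {orbit \<tau> s}"
        proof -
          have A: "\<And>i. i \<in> set cs \<Longrightarrow> orbit \<tau> i = orbit \<tau> s" using scs orb_eq by blast
          show ?thesis using A sS by blast
        qed
        ultimately show ?thesis by (metis image_Un insert_is_Un)
      qed
      have nin: "orbit \<tau> s \<notin> (\<lambda>i. orbit \<tau> i) ` S'"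
      proof
        assume "orbit \<tau> s \<in> (\<lambda>i. orbit \<tau> i) ` S'"
        then obtain i where "i \<in> S'" "orbit \<tau> i = orbit \<tau> s" by auto
        then show False using self[of i] scs unfolding S'_def by auto
      qed
      have fin: "finite ((\<lambda>i. orbit \<tau> i) ` S')" using less.prems(1) unfolding S'_def by auto
      show "mset (map set (cs # css)) = mset_set ((\<lambda>i. orbit \<tau> i) ` S)"
        unfolding img using css(5) scs nin fin by simp
    qed
  qed
qed

definition Alt :: "nat \<Rightarrow> ((nat \<Rightarrow> 'm) \<Rightarrow> 'a::comm_ring_1) \<Rightarrow> (nat \<Rightarrow> 'm) \<Rightarrow> 'a" where
  "Alt k F x = (\<Sum>\<tau> | \<tau> permutes {..<k}. of_int (sign \<tau>) * F (\<lambda>i. x (\<tau> i)))"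

lemma Alt_compose:
  assumes \<pi>: "\<pi> permutes {..<k}"
  shows "Alt k (\<lambda>y. F (\<lambda>i. y (\<pi> i))) x = of_int (sign \<pi>) * Alt k F x"
proof -
  have pp: "permutation \<pi>" using \<pi> permutes_imp_permutation by blast
  have "Alt k (\<lambda>y. F (\<lambda>i. y (\<pi> i))) x =
      (\<Sum>\<tau> | \<tau> permutes {..<k}. of_int (sign \<tau>) * F (\<lambda>i. x (\<tau> (\<pi> i))))"
    unfolding Alt_def by simp
  also have "\<dots> = (\<Sum>\<rho> | \<rho> permutes {..<k}. of_int (sign \<pi>) * (of_int (sign \<rho>) * F (\<lambda>i. x (\<rho> i))))"
  proof (rule sum.reindex_bij_witness[of _ "\<lambda>\<rho>. \<rho> \<circ> inv \<pi>" "\<lambda>\<tau>. \<tau> \<circ> \<pi>"])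
    fix \<tau> assume t: "\<tau> \<in> {\<tau>. \<tau> permutes {..<k}}"
    show "\<tau> \<circ> \<pi> \<circ> inv \<pi> = \<tau>" using permutes_inv_o(1)[OF \<pi>] by (simp add: o_assoc[symmetric])
    show "\<tau> \<circ> \<pi> \<in> {\<tau>. \<tau> permutes {..<k}}" using t \<pi> by (auto intro: permutes_compose)
    have tp: "permutation \<tau>" using t permutes_imp_permutation by blast
    have "sign (\<tau> \<circ> \<pi>) = sign \<tau> * sign \<pi>" by (rule sign_compose[OF tp pp])
    then have i: "sign \<pi> * sign (\<tau> \<circ> \<pi>) = sign \<tau>"
      by (metis mult.left_commute mult.right_neutral sign_idempotent)
    then have "of_int (sign \<pi>) * of_int (sign (\<tau> \<circ> \<pi>)) = (of_int (sign \<tau>) :: 'a)"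
      by (metis of_int_mult)
    then show "of_int (sign \<pi>) * (of_int (sign (\<tau> \<circ> \<pi>)) * F (\<lambda>i. x ((\<tau> \<circ> \<pi>) i))) =
          of_int (sign \<tau>) * F (\<lambda>i. x (\<tau> (\<pi> i)))"
      by (simp add: mult.assoc[symmetric])
  next
    fix \<rho> assume r: "\<rho> \<in> {\<tau>. \<tau> permutes {..<k}}"
    show "\<rho> \<circ> inv \<pi> \<circ> \<pi> = \<rho>" using permutes_inv_o(2)[OF \<pi>] by (simp add: o_assoc[symmetric])
    show "\<rho> \<circ> inv \<pi> \<in> {\<tau>. \<tau> permutes {..<k}}" using r \<pi> by (auto intro: permutes_compose permutes_inv)
  qed
  also have "\<dots> = of_int (sign \<pi>) * Alt k F x"
    unfolding Alt_def by (simp add: sum_distrib_left)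
  finally show ?thesis .
qed

lemma Alt_vanish:
  fixes F :: "(nat \<Rightarrow> 'm) \<Rightarrow> 'a::field_char_0"
  assumes \<pi>: "\<pi> permutes {..<k}" "sign \<pi> = -1" and inv: "\<And>y. F (\<lambda>i. y (\<pi> i)) = F y"
  shows "Alt k F x = 0"
proof -
  have "Alt k (\<lambda>y. F (\<lambda>i. y (\<pi> i))) x = Alt k F x" using inv by simp
  then have "Alt k F x = - Alt k F x" using Alt_compose[OF \<pi>(1), of F x] \<pi>(2) by simp
  then show ?thesis by simp
qed

lemma tr_perm_ST:
  "tr_perm n \<sigma> (ST h x) = (\<Sum>\<tau> | \<tau> permutes {..<sum_list h}.
      of_int (sign \<tau>) * tr_perm n \<sigma> (tensor_mats (length h) (\<lambda>j. Xblock h j (\<lambda>i. x (\<tau> i)))))"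
  unfolding tr_perm_def ST_def
  by (simp add: sum_distrib_left sum_distrib_right mult_ac sum.swap[of _ "{\<tau>. \<tau> permutes _}"])

lemma tr_perm_tensor:
  fixes Y :: "nat \<Rightarrow> 'a::comm_ring_1^'d::finite^'d"
  shows "tr_perm n \<sigma> (tensor_mats n Y) = Gs {..<n} (inv \<sigma>) Y"
proof -
  have "tr_perm n \<sigma> (tensor_mats n Y) =
      (\<Sum>s\<in>midx n. \<Sum>r\<in>midx n. perm_op n \<sigma> r s * tensor_mats n Y s r)"
    unfolding tr_perm_def by (rule sum.swap)
  also have "\<dots> = (\<Sum>s\<in>midx n. tensor_mats n Y s (restrict (\<lambda>j. s (inv \<sigma> j)) {..<n}))"
  proof (intro sum.cong refl)
    fix s :: "nat \<Rightarrow> 'd"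
    have m: "restrict (\<lambda>j. s (inv \<sigma> j)) {..<n} \<in> midx n" unfolding midx_def by auto
    show "(\<Sum>r\<in>midx n. perm_op n \<sigma> r s * tensor_mats n Y s r) =
        tensor_mats n Y s (restrict (\<lambda>j. s (inv \<sigma> j)) {..<n})"
    proof -
      have fin: "finite (midx n :: (nat \<Rightarrow> 'd) set)" unfolding midx_def by (simp add: finite_PiE)
      have "(\<Sum>r\<in>midx n. perm_op n \<sigma> r s * tensor_mats n Y s r) =
          (\<Sum>r\<in>midx n. if r = restrict (\<lambda>j. s (inv \<sigma> j)) {..<n} then tensor_mats n Y s r else 0)"
        by (intro sum.cong) (auto simp: perm_op_def)
      also have "\<dots> = tensor_mats n Y s (restrict (\<lambda>j. s (inv \<sigma> j)) {..<n})"
        using m fin by (simp add: sum.delta)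
      finally show ?thesis .
    qed
  qed
  also have "\<dots> = Gs {..<n} (inv \<sigma>) Y"
    unfolding Gs_def midx_def tensor_mats_def by (intro sum.cong prod.cong refl) auto
  finally show ?thesis .
qed

definition TW :: "nat list list \<Rightarrow> (nat \<Rightarrow> 'a::comm_ring_1^'d^'d) \<Rightarrow> 'a" where
  "TW ws y = prod_list (map (\<lambda>u. mtrace (mprod_list (map y u))) ws)"

fun std :: "nat list \<Rightarrow> nat \<Rightarrow> nat list list" where
  "std [] off = []"
| "std (l # ls) off = [off..<off+l] # std ls (off + l)"

lemma TW_compose: "TW ws (\<lambda>i. y (\<pi> i)) = TW (map (map \<pi>) ws) y"
  unfolding TW_def by (simp add: o_def)

lemma TW_Cons: "TW (w # ws) y = mtrace (mprod_list (map y w)) * TW ws y"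
  by (simp add: TW_def)

lemma TW_append: "TW (ws @ vs) y = TW ws y * TW vs y"
  by (simp add: TW_def)

lemma TW_mset: "mset ws = mset vs \<Longrightarrow> TW ws y = TW vs y"
  unfolding TW_def by (metis mset_map prod_mset_prod_list)

lemma std_append: "std (as @ bs) off = std as off @ std bs (off + sum_list as)"
  by (induction as arbitrary: off) (auto simp: add.assoc)

lemma std_range: "u \<in> set (std ls off) \<Longrightarrow> i \<in> set u \<Longrightarrow> off \<le> i \<and> i < off + sum_list ls"
  by (induction ls arbitrary: off) fastforce+

lemma std_nth_concat:
  "map (map (\<lambda>i. (pre @ concat ws) ! i)) (std (map length ws) (length pre)) = ws"
proof (induction ws arbitrary: pre)
  case Nil then show ?case by simp
next
  case (Cons w ws)
  have "map (\<lambda>i. (pre @ w @ concat ws) ! i) [length pre..<length pre + length w] = w"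
    by (rule nth_equalityI) (auto simp: nth_append)
  moreover have "map (map (\<lambda>i. ((pre @ w) @ concat ws) ! i)) (std (map length ws) (length (pre @ w))) = ws"
    by (rule Cons.IH)
  ultimately show ?case by simp
qed

lemma relabel:
  assumes "mset (concat ws) = mset [0..<k]"
  shows "\<exists>\<pi>. \<pi> permutes {..<k} \<and> (\<forall>y::nat \<Rightarrow> 'a::comm_ring_1^'d^'d. TW ws y = TW (std (map length ws) 0) (\<lambda>i. y (\<pi> i)))"
proof -
  define L where "L = concat ws"
  have d: "distinct L" using assms unfolding L_def by (metis distinct_upt mset_eq_imp_distinct_iff)
  have sL: "set L = {..<k}" using assms unfolding L_def by (metis atLeast_upt set_mset_mset)
  have lL: "length L = k" using assms unfolding L_def by (metis length_upt minus_nat.diff_0 size_mset)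
  define \<pi> where "\<pi> i = (if i < k then L ! i else i)" for i
  have bij: "bij_betw ((!) L) {..<k} {..<k}" using bij_betw_nth[OF d] lL sL by simp
  have "bij_betw \<pi> {..<k} {..<k}"
    using bij by (rule bij_betw_cong[THEN iffD1, rotated]) (simp add: \<pi>_def)
  then have pp: "\<pi> permutes {..<k}" by (rule bij_imp_permutes) (simp add: \<pi>_def)
  have sk: "sum_list (map length ws) = k" using lL unfolding L_def by (simp add: length_concat)
  have "map (map \<pi>) (std (map length ws) 0) = map (map (\<lambda>i. ([] @ L) ! i)) (std (map length ws) (length ([]::nat list)))"
  proof -
    have H: "\<pi> i = L ! i" if "u \<in> set (std (map length ws) 0)" "i \<in> set u" for u i
    proof -
      have "i < k" using std_range[OF that] sk by auto
      then show "\<pi> i = L ! i" by (simp add: \<pi>_def)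
    qed
    show ?thesis by (auto intro!: map_cong H)
  qed
  also have "\<dots> = ws" unfolding L_def by (rule std_nth_concat)
  finally have "map (map \<pi>) (std (map length ws) 0) = ws" .
  then show ?thesis using pp by (intro exI[of _ \<pi>]) (simp add: TW_compose)
qed

lemma mtrace_sum: "mtrace (sum f S) = (\<Sum>s\<in>S. mtrace (f s))"
  unfolding mtrace_def by (simp add: sum.swap[of _ UNIV])

lemma mtrace_msmult: "mtrace (msmult c A) = c * mtrace A"
  unfolding mtrace_def msmult_def by (simp add: sum_distrib_left)

lemma Tfun_Alt: "Tfun m y = Alt m (\<lambda>z. mtrace (mprod_list (map z [0..<m]))) y"
  unfolding Tfun_def Alt_def mtrace_sum mtrace_msmult by simp

lemma map_plus_upt: "map (\<lambda>i. c + i) [a..<b] = [c + a..<c + b]"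
  by (rule nth_equalityI) auto

lemma std_shift: "map (map (\<lambda>i. c + i)) (std ms off) = std ms (c + off)"
  by (induction ms arbitrary: off) (simp_all add: map_plus_upt add.assoc)

lemma TW_std_shift: "TW (std ms off) z = TW (std ms 0) (\<lambda>i. z (off + i))"
  using std_shift[of off ms 0] by (simp add: TW_compose)

definition bt :: "nat \<Rightarrow> nat \<Rightarrow> (nat \<Rightarrow> nat) \<Rightarrow> (nat \<Rightarrow> nat) \<Rightarrow> nat \<Rightarrow> nat" where
  "bt m K \<alpha> \<rho> j = (if j < m then \<alpha> j else if j < m + K then m + \<rho> (j - m) else j)"

lemma bt_props:
  assumes a: "\<alpha> permutes {..<m}" and r: "\<rho> permutes {..<K}"
  shows "bt m K \<alpha> \<rho> permutes {..<m+K}" "sign (bt m K \<alpha> \<rho>) = sign \<alpha> * sign \<rho>"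
    "\<And>j. j < m \<Longrightarrow> bt m K \<alpha> \<rho> j = \<alpha> j" "\<And>i. bt m K \<alpha> \<rho> (m + i) = m + \<rho> i"
proof -
  define sh where "sh = map_permutation {..<K} (\<lambda>i. m + i) \<rho>"
  have inj: "inj_on (\<lambda>i. m + i) {..<K}" by (auto simp: inj_on_def)
  have img: "(\<lambda>i. m + i) ` {..<K} = {m..<m+K}"
    using image_add_atLeastLessThan[of m 0 K] by (simp add: lessThan_atLeast0 add.commute)
  have bij: "bij_betw (\<lambda>i. m + i) {..<K} {m..<m+K}" using inj img by (simp add: bij_betw_def)
  have shp: "sh permutes {m..<m+K}" unfolding sh_def by (rule map_permutation_permutes[OF bij r])
  have shs: "sign sh = sign \<rho>" unfolding sh_def by (rule sign_map_permutation[OF inj r]) simp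
  have shv: "sh j = (if m \<le> j \<and> j < m + K then m + \<rho> (j - m) else j)" for j
  proof (cases "m \<le> j \<and> j < m + K")
    case True
    then have "j \<in> (\<lambda>i. m + i) ` {..<K}" using img by auto
    moreover have "inv_into {..<K} (\<lambda>i. m + i) j = j - m"
      using True by (intro inv_into_f_eq[OF inj]) auto
    ultimately show ?thesis using True
      unfolding sh_def map_permutation_def restrict_id_def by simp
  next
    case False
    then have "j \<notin> (\<lambda>i. m + i) ` {..<K}" using img by auto
    then have "sh j = j" unfolding sh_def map_permutation_def restrict_id_def by simp
    then show ?thesis using False by auto
  qed
  have eq: "bt m K \<alpha> \<rho> = \<alpha> \<circ> sh"
  proof
    fix j
    show "bt m K \<alpha> \<rho> j = (\<alpha> \<circ> sh) j"
    proof (cases "j < m")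
      case True
      then show ?thesis by (simp add: bt_def shv)
    next
      case False
      have sj: "sh j = bt m K \<alpha> \<rho> j" using False by (simp add: shv bt_def)
      have "sh j \<notin> {..<m}" using False shv[of j] by auto
      then have "\<alpha> (sh j) = sh j" by (intro permutes_not_in[OF a])
      then show ?thesis using sj by (simp add: o_def)
    qed
  qed
  have a2: "\<alpha> permutes {..<m+K}" using a by (rule permutes_subset) auto
  have s2: "sh permutes {..<m+K}" using shp by (rule permutes_subset) auto
  show "bt m K \<alpha> \<rho> permutes {..<m+K}" unfolding eq by (rule permutes_compose[OF s2 a2])
  show "sign (bt m K \<alpha> \<rho>) = sign \<alpha> * sign \<rho>"
  proof -
    have pa: "permutation \<alpha>" using a2 permutes_imp_permutation by blast
    have ps: "permutation sh" using s2 permutes_imp_permutation by blast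
    show ?thesis using sign_compose[OF pa ps] shs eq by simp
  qed
  show "\<And>j. j < m \<Longrightarrow> bt m K \<alpha> \<rho> j = \<alpha> j" by (simp add: bt_def)
  show "\<And>i. bt m K \<alpha> \<rho> (m + i) = m + \<rho> i"
  proof -
    fix i
    show "bt m K \<alpha> \<rho> (m + i) = m + \<rho> i"
    proof (cases "i < K")
      case False
      then have "\<rho> i = i" using r permutes_not_in by fastforce
      then show ?thesis using False by (simp add: bt_def)
    qed (simp add: bt_def)
  qed
qed

lemma wedgeT_Alt:
  fixes x :: "nat \<Rightarrow> 'a::field_char_0^'d::finite^'d"
  shows "wedgeT ls x = Alt (sum_list ls) (TW (std ls 0)) x"
proof (induction ls arbitrary: x)
  case Nil
  then show ?case by (simp add: Alt_def TW_def)
next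
  case (Cons m ms)
  define K where "K = sum_list ms"
  define A where "A = (\<lambda>z::nat \<Rightarrow> 'a^'d^'d. mtrace (mprod_list (map z [0..<m])))"
  define B :: "(nat \<Rightarrow> 'a^'d^'d) \<Rightarrow> 'a" where "B = TW (std ms 0)"
  define F :: "(nat \<Rightarrow> 'a^'d^'d) \<Rightarrow> 'a" where "F = TW (std (m # ms) 0)"
  define Pm where "Pm = {\<alpha>. \<alpha> permutes {..<m}}"
  define PK where "PK = {\<rho>. \<rho> permutes {..<K}}"
  define P where "P = {\<tau>. \<tau> permutes {..<m+K}}"
  have F_eq: "F z = A z * B (\<lambda>i. z (m + i))" for z
  proof -
    have "std (m # ms) 0 = [0..<m] # std ms m" by simp
    then show ?thesis unfolding F_def A_def B_def by (simp add: TW_Cons TW_std_shift[of ms m])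
  qed
  have key: "F (\<lambda>i. z (bt m K \<alpha> \<rho> i)) = A (\<lambda>i. z (\<alpha> i)) * B (\<lambda>i. z (m + \<rho> i))"
    if "\<alpha> \<in> Pm" "\<rho> \<in> PK" for z \<alpha> \<rho>
  proof -
    have e1: "map (\<lambda>i. z (bt m K \<alpha> \<rho> i)) [0..<m] = map (\<lambda>i. z (\<alpha> i)) [0..<m]"
      using bt_props(3)[of \<alpha> m \<rho> K] that unfolding Pm_def PK_def by simp
    have e2: "(\<lambda>i. z (bt m K \<alpha> \<rho> (m + i))) = (\<lambda>i. z (m + \<rho> i))"
      using bt_props(4)[of \<alpha> m \<rho> K] that unfolding Pm_def PK_def by simp
    have "F (\<lambda>i. z (bt m K \<alpha> \<rho> i)) = A (\<lambda>i. z (bt m K \<alpha> \<rho> i)) * B (\<lambda>i. z (bt m K \<alpha> \<rho> (m + i)))"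
      by (rule F_eq)
    also have "\<dots> = A (\<lambda>i. z (\<alpha> i)) * B (\<lambda>i. z (m + \<rho> i))"
      unfolding e2 unfolding A_def e1 ..
    finally show ?thesis .
  qed
  have step1: "Tfun m (\<lambda>i. x (\<tau> i)) * wedgeT ms (\<lambda>i. x (\<tau> (m + i))) =
      (\<Sum>\<alpha>\<in>Pm. \<Sum>\<rho>\<in>PK. of_int (sign \<alpha>) * of_int (sign \<rho>) *
          (A (\<lambda>i. x (\<tau> (\<alpha> i))) * B (\<lambda>i. x (\<tau> (m + \<rho> i)))))" for \<tau>
    unfolding Tfun_Alt Cons.IH K_def[symmetric] Alt_def sum_product A_def[symmetric] B_def[symmetric]
      Pm_def PK_def by (intro sum.cong refl) (simp add: mult_ac)
  have "wedgeT (m # ms) x = (1 / (fact m * fact K)) *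
      (\<Sum>\<tau>\<in>P. of_int (sign \<tau>) * Tfun m (\<lambda>i. x (\<tau> i)) * wedgeT ms (\<lambda>i. x (\<tau> (m + i))))"
    by (simp add: wedge_def K_def P_def)
  also have "(\<Sum>\<tau>\<in>P. of_int (sign \<tau>) * Tfun m (\<lambda>i. x (\<tau> i)) * wedgeT ms (\<lambda>i. x (\<tau> (m + i)))) =
      (\<Sum>\<tau>\<in>P. \<Sum>\<alpha>\<in>Pm. \<Sum>\<rho>\<in>PK. of_int (sign (bt m K \<alpha> \<rho>)) *
         (of_int (sign \<tau>) * F (\<lambda>i. x (\<tau> (bt m K \<alpha> \<rho> i)))))"
  proof (intro sum.cong refl)
    fix \<tau>
    have "of_int (sign \<tau>) * Tfun m (\<lambda>i. x (\<tau> i)) * wedgeT ms (\<lambda>i. x (\<tau> (m + i))) =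
       of_int (sign \<tau>) * (Tfun m (\<lambda>i. x (\<tau> i)) * wedgeT ms (\<lambda>i. x (\<tau> (m + i))))"
      by (simp add: mult.assoc)
    also have "\<dots> = (\<Sum>\<alpha>\<in>Pm. \<Sum>\<rho>\<in>PK. of_int (sign (bt m K \<alpha> \<rho>)) *
         (of_int (sign \<tau>) * F (\<lambda>i. x (\<tau> (bt m K \<alpha> \<rho> i)))))"
      unfolding step1 sum_distrib_left
    proof (intro sum.cong refl)
      fix \<alpha> \<rho> assume ar: "\<alpha> \<in> Pm" "\<rho> \<in> PK"
      have sg: "sign (bt m K \<alpha> \<rho>) = sign \<alpha> * sign \<rho>"
        using bt_props(2) ar unfolding Pm_def PK_def by blast
      show "of_int (sign \<tau>) * (of_int (sign \<alpha>) * of_int (sign \<rho>) *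
          (A (\<lambda>i. x (\<tau> (\<alpha> i))) * B (\<lambda>i. x (\<tau> (m + \<rho> i))))) =
          of_int (sign (bt m K \<alpha> \<rho>)) * (of_int (sign \<tau>) * F (\<lambda>i. x (\<tau> (bt m K \<alpha> \<rho> i))))"
        unfolding sg key[OF ar, of "\<lambda>i. x (\<tau> i)"] by (simp add: mult_ac)
    qed
    finally show "of_int (sign \<tau>) * Tfun m (\<lambda>i. x (\<tau> i)) * wedgeT ms (\<lambda>i. x (\<tau> (m + i))) =
       (\<Sum>\<alpha>\<in>Pm. \<Sum>\<rho>\<in>PK. of_int (sign (bt m K \<alpha> \<rho>)) *
         (of_int (sign \<tau>) * F (\<lambda>i. x (\<tau> (bt m K \<alpha> \<rho> i)))))" .
  qed
  also have "\<dots> = (\<Sum>\<alpha>\<in>Pm. \<Sum>\<rho>\<in>PK. of_int (sign (bt m K \<alpha> \<rho>)) *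
         (\<Sum>\<tau>\<in>P. of_int (sign \<tau>) * F (\<lambda>i. x (\<tau> (bt m K \<alpha> \<rho> i)))))"
    by (simp add: sum_distrib_left sum.swap[of _ P])
  also have "\<dots> = (\<Sum>\<alpha>\<in>Pm. \<Sum>\<rho>\<in>PK. Alt (m + K) F x)"
  proof (intro sum.cong refl)
    fix \<alpha> \<rho> assume ar: "\<alpha> \<in> Pm" "\<rho> \<in> PK"
    have bp: "bt m K \<alpha> \<rho> permutes {..<m+K}" using bt_props(1) ar unfolding Pm_def PK_def by blast
    have "(\<Sum>\<tau>\<in>P. of_int (sign \<tau>) * F (\<lambda>i. x (\<tau> (bt m K \<alpha> \<rho> i)))) =
        Alt (m + K) (\<lambda>y. F (\<lambda>i. y (bt m K \<alpha> \<rho> i))) x"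
      unfolding Alt_def P_def by simp
    also have "\<dots> = of_int (sign (bt m K \<alpha> \<rho>)) * Alt (m + K) F x"
      by (rule Alt_compose[OF bp])
    finally show "of_int (sign (bt m K \<alpha> \<rho>)) *
         (\<Sum>\<tau>\<in>P. of_int (sign \<tau>) * F (\<lambda>i. x (\<tau> (bt m K \<alpha> \<rho> i)))) = Alt (m + K) F x"
      by (simp add: mult.assoc[symmetric] flip: of_int_mult)
  qed
  also have "\<dots> = of_nat (fact m * fact K) * Alt (m + K) F x"
  proof -
    have "card Pm = fact m" unfolding Pm_def by (rule card_permutations) auto
    moreover have "card PK = fact K" unfolding PK_def by (rule card_permutations) auto
    ultimately show ?thesis by simp
  qed
  finally show ?case unfolding F_def K_def by simp
qed

lemma sign_cycle_of_list:
  "distinct cs \<Longrightarrow> cs \<noteq> [] \<Longrightarrow> sign (cycle_of_list cs) = (-1) ^ (length cs - 1)"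
proof (induction cs rule: cycle_of_list.induct)
  case (1 i j cs)
  have "sign (cycle_of_list (i # j # cs)) = sign (Transposition.transpose i j) * sign (cycle_of_list (j # cs))"
    by (simp add: sign_compose permutation_swap_id permutation_of_cycle)
  also have "sign (Transposition.transpose i j) = -1" using "1.prems" by (simp add: sign_swap_id)
  also have "sign (cycle_of_list (j # cs)) = (-1) ^ (length (j # cs) - 1)"
    using "1.prems" by (intro "1.IH") auto
  finally show ?case by simp
qed auto

lemma mtrace_rotate1:
  fixes y :: "nat \<Rightarrow> 'a::comm_ring_1^'d^'d"
  shows "mtrace (mprod_list (map y (rotate1 cs))) = mtrace (mprod_list (map y cs))"
proof (cases cs)
  case (Cons c cs')
  have e1: "mprod_list (map y (rotate1 cs)) = mprod_list (map y cs') ** y c"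
    using Cons by (simp add: mprod_list_append mprod_list_Cons mprod_list_Nil)
  have e2: "mprod_list (map y cs) = y c ** mprod_list (map y cs')"
    using Cons by (simp add: mprod_list_Cons)
  have mt: "mtrace A = trace A" for A :: "'a^'d^'d" by (simp add: mtrace_def trace_def)
  show ?thesis unfolding e1 e2 mt by (rule trace_mul_sym)
qed simp

lemma map_map_id_std:
  assumes "\<And>i. lo \<le> i \<Longrightarrow> i < lo + sum_list ls \<Longrightarrow> \<pi> i = i"
  shows "map (map \<pi>) (std ls lo) = std ls lo"
proof (rule map_idI)
  fix u assume u: "u \<in> set (std ls lo)"
  show "map \<pi> u = u" by (rule map_idI) (use std_range[OF u] assms in auto)
qed

lemma Alt_std_even:
  fixes x :: "nat \<Rightarrow> 'a::field_char_0^'d::finite^'d"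
  assumes "even l" "l > 0"
  shows "Alt (sum_list (as @ l # bs)) (TW (std (as @ l # bs) 0)) x = 0"
proof -
  define o1 where "o1 = sum_list as"
  define k where "k = sum_list (as @ l # bs)"
  define cs where "cs = [o1..<o1+l]"
  define \<pi> where "\<pi> = cycle_of_list cs"
  have dcs: "distinct cs" "cs \<noteq> []" "length cs = l" using assms unfolding cs_def by auto
  have sc: "set cs = {o1..<o1+l}" unfolding cs_def by simp
  have pp: "\<pi> permutes {..<k}"
  proof -
    have "\<pi> permutes set cs" unfolding \<pi>_def by (rule cycle_permutes)
    then show ?thesis by (rule permutes_subset) (auto simp: sc k_def o1_def)
  qed
  have sg: "sign \<pi> = -1"
  proof -
    have "sign \<pi> = (-1) ^ (l - 1)" unfolding \<pi>_def using sign_cycle_of_list[OF dcs(1,2)] dcs(3) by simp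
    moreover have "odd (l - 1)" using assms by simp
    ultimately show ?thesis by simp
  qed
  have fix_out: "\<pi> i = i" if "i \<notin> set cs" for i
    unfolding \<pi>_def by (rule id_outside_supp[OF that])
  have rot: "map \<pi> cs = rotate1 cs"
    using cyclic_rotation[OF dcs(1), of 1] unfolding \<pi>_def by simp
  have std_eq: "std (as @ l # bs) 0 = std as 0 @ cs # std bs (o1 + l)"
    by (simp add: std_append o1_def cs_def)
  have m1: "map (map \<pi>) (std as 0) = std as 0"
    by (rule map_map_id_std) (auto intro!: fix_out simp: sc o1_def)
  have m2: "map (map \<pi>) (std bs (o1 + l)) = std bs (o1 + l)"
    by (rule map_map_id_std) (auto intro!: fix_out simp: sc)
  show ?thesis unfolding k_def[symmetric]
  proof (rule Alt_vanish[OF pp sg])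
    fix y :: "nat \<Rightarrow> 'a^'d^'d"
    show "TW (std (as @ l # bs) 0) (\<lambda>i. y (\<pi> i)) = TW (std (as @ l # bs) 0) y"
      unfolding TW_compose std_eq using m1 m2 rot
      by (simp add: TW_append TW_Cons mtrace_rotate1)
  qed
qed

fun swb :: "nat \<Rightarrow> nat \<Rightarrow> nat \<Rightarrow> nat \<Rightarrow> nat" where
  "swb a d 0 = id"
| "swb a d (Suc c) = Transposition.transpose (a + c) (a + d + c) \<circ> swb a d c"

lemma swb_perm: "permutation (swb a d c)"
proof (induction c)
  case (Suc c)
  have "permutation (Transposition.transpose (a + c) (a + d + c) \<circ> swb a d c)"
    by (rule permutation_compose[OF permutation_swap_id Suc.IH])
  then show ?case by (simp only: swb.simps)
qed simp

lemma swb_sign: "d > 0 \<Longrightarrow> sign (swb a d c) = (-1) ^ c"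
  by (induction c) (simp_all add: sign_compose permutation_swap_id swb_perm sign_swap_id)

lemma swb_val:
  "c \<le> d \<Longrightarrow> swb a d c i = (if a \<le> i \<and> i < a + c then i + d
      else if a + d \<le> i \<and> i < a + d + c then i - d else i)"
proof (induction c arbitrary: i)
  case 0 then show ?case by simp
next
  case (Suc c)
  have IH: "swb a d c j = (if a \<le> j \<and> j < a + c then j + d
      else if a + d \<le> j \<and> j < a + d + c then j - d else j)" for j
    using Suc by simp
  show ?case using Suc.prems by (auto simp: IH Transposition.transpose_def)
qed

lemma swb_permutes: "c \<le> d \<Longrightarrow> swb a d c permutes {a..<a + d + c}"
  by (induction c) (auto intro!: permutes_compose permutes_swap_id elim: permutes_subset)

lemma Alt_std_dup:
  fixes x :: "nat \<Rightarrow> 'a::field_char_0^'d::finite^'d"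
  assumes "odd l"
  shows "Alt (sum_list (as @ l # l # bs)) (TW (std (as @ l # l # bs) 0)) x = 0"
proof -
  define o1 where "o1 = sum_list as"
  define k where "k = sum_list (as @ l # l # bs)"
  define \<pi> where "\<pi> = swb o1 l l"
  have l0: "l > 0" using assms by (cases l) auto
  have pp: "\<pi> permutes {..<k}"
  proof -
    have "\<pi> permutes {o1..<o1 + l + l}" unfolding \<pi>_def by (rule swb_permutes) simp
    then show ?thesis by (rule permutes_subset) (auto simp: k_def o1_def)
  qed
  have sg: "sign \<pi> = -1" unfolding \<pi>_def using swb_sign[OF l0, of o1 l] assms by simp
  have val: "\<pi> i = (if o1 \<le> i \<and> i < o1 + l then i + l
      else if o1 + l \<le> i \<and> i < o1 + l + l then i - l else i)" for i
    unfolding \<pi>_def by (rule swb_val) simp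
  have std_eq: "std (as @ l # l # bs) 0 = std as 0 @ [o1..<o1+l] # [o1+l..<o1+l+l] # std bs (o1 + l + l)"
    by (simp add: std_append o1_def)
  have m1: "map (map \<pi>) (std as 0) = std as 0"
    by (rule map_map_id_std) (auto simp: val o1_def)
  have m2: "map (map \<pi>) (std bs (o1 + l + l)) = std bs (o1 + l + l)"
    by (rule map_map_id_std) (auto simp: val)
  have w1: "map \<pi> [o1..<o1+l] = [o1+l..<o1+l+l]"
    by (rule nth_equalityI) (auto simp: val)
  have w2: "map \<pi> [o1+l..<o1+l+l] = [o1..<o1+l]"
    by (rule nth_equalityI) (auto simp: val)
  show ?thesis unfolding k_def[symmetric]
  proof (rule Alt_vanish[OF pp sg])
    fix y :: "nat \<Rightarrow> 'a^'d^'d"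
    show "TW (std (as @ l # l # bs) 0) (\<lambda>i. y (\<pi> i)) = TW (std (as @ l # l # bs) 0) y"
      unfolding TW_compose std_eq using m1 m2 w1 w2
      by (simp add: TW_append TW_Cons mult_ac)
  qed
qed

definition blk :: "nat list \<Rightarrow> nat \<Rightarrow> nat list" where
  "blk h j = [sum_list (take j h)..<sum_list (take (Suc j) h)]"

lemma Xblock_blk: "Xblock h j y = mprod_list (map y (blk h j))"
  by (simp add: Xblock_def blk_def)

lemma length_blk: "j < length h \<Longrightarrow> length (blk h j) = h ! j"
  by (simp add: blk_def take_Suc_conv_app_nth)

lemma concat_blk: "m \<le> length h \<Longrightarrow> concat (map (blk h) [0..<m]) = [0..<sum_list (take m h)]"
proof (induction m)
  case (Suc m)
  then have m: "m < length h" by simp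
  have "concat (map (blk h) [0..<Suc m]) = [0..<sum_list (take m h)] @ blk h m"
    using Suc by simp
  also have "\<dots> = [0..<sum_list (take m h) + h ! m]"
    using m by (simp add: blk_def take_Suc_conv_app_nth upt_add_eq_append[of 0 "sum_list (take m h)"])
  also have "\<dots> = [0..<sum_list (take (Suc m) h)]" using m by (simp add: take_Suc_conv_app_nth)
  finally show ?case .
qed simp

lemma mprod_concat:
  "mprod_list (map y (concat (map g cs))) = mprod_list (map (\<lambda>j. mprod_list (map y (g j))) cs)"
  by (induction cs) (simp_all add: mprod_list_append mprod_list_Cons)

lemma concat_concat_map: "concat (map (\<lambda>cs. concat (map g cs)) css) = concat (map g (concat css))"
  by (induction css) simp_all

lemma mset_concat_map_perm:
  assumes "mset L = mset L'"
  shows "mset (concat (map g L)) = mset (concat (map g L'))"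
proof -
  have "mset (concat (map g L)) = sum_mset (image_mset (\<lambda>j. mset (g j)) (mset L))" for L
    by (induction L) simp_all
  then show ?thesis using assms by simp
qed

lemma mset_concat_perm:
  assumes "mset L = mset L'"
  shows "mset (concat L) = mset (concat L')"
  using mset_concat_map_perm[OF assms, of id] by simp

lemma distinct_concat_mem: "distinct (concat css) \<Longrightarrow> cs \<in> set css \<Longrightarrow> distinct cs"
  by (induction css) auto

lemma Q_words:
  assumes \<sigma>: "\<sigma> permutes {..<length h}" and pos: "\<forall>p\<in>set h. 0 < p"
  shows "\<exists>ws. (\<forall>y :: nat \<Rightarrow> 'a::comm_ring_1^'d::finite^'d.
      tr_perm (length h) \<sigma> (tensor_mats (length h) (\<lambda>j. Xblock h j y)) = TW ws y)
    \<and> mset (concat ws) = mset [0..<sum_list h]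
    \<and> mset (map length ws) = cycle_partition h \<sigma>
    \<and> (\<forall>w\<in>set ws. w \<noteq> [])"
proof -
  define n where "n = length h"
  have ps: "permutation \<sigma>" using \<sigma> permutes_imp_permutation by blast
  have pt: "permutation (inv \<sigma>)" by (rule permutation_inverse[OF ps])
  have img: "inv \<sigma> ` {..<n} \<subseteq> {..<n}"
    using permutes_image[OF permutes_inv[OF \<sigma>]] n_def by simp
  obtain css where css: "\<forall>Y::nat \<Rightarrow> 'a::comm_ring_1^'d::finite^'d.
            Gs {..<n} (inv \<sigma>) Y = prod_list (map (\<lambda>cs. mtrace (mprod_list (map Y cs))) css)"
          "distinct (concat css)" "set (concat css) = {..<n}" "\<forall>cs\<in>set css. cs \<noteq> []"
          "mset (map set css) = mset_set ((\<lambda>i. orbit (inv \<sigma>) i) ` {..<n})"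
    using Gs_decomp[OF _ pt img] by blast
  define ws where "ws = map (\<lambda>cs. concat (map (blk h) cs)) css"
  have lt: "j < n" if "cs \<in> set css" "j \<in> set cs" for cs j
    using css(3) that by auto
  show ?thesis
  proof (intro exI[of _ ws] conjI allI ballI)
    fix y :: "nat \<Rightarrow> 'a::comm_ring_1^'d::finite^'d"
    show "tr_perm (length h) \<sigma> (tensor_mats (length h) (\<lambda>j. Xblock h j y)) = TW ws y"
    proof -
      have "tr_perm (length h) \<sigma> (tensor_mats (length h) (\<lambda>j. Xblock h j y)) =
          Gs {..<n} (inv \<sigma>) (\<lambda>j. Xblock h j y)" unfolding n_def by (rule tr_perm_tensor)
      also have "\<dots> = prod_list (map (\<lambda>cs. mtrace (mprod_list (map (\<lambda>j. Xblock h j y) cs))) css)"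
        using css(1) by blast
      also have "\<dots> = TW ws y"
        by (simp add: ws_def TW_def o_def mprod_concat Xblock_blk)
      finally show ?thesis .
    qed
  next
    have "mset (concat ws) = mset (concat (map (blk h) (concat css)))"
      unfolding ws_def concat_concat_map ..
    also have "\<dots> = mset (concat (map (blk h) [0..<n]))"
    proof (rule mset_concat_map_perm)
      show "mset (concat css) = mset [0..<n]"
        using mset_set_set[OF css(2)] css(3) by (simp add: atLeast0LessThan)
    qed
    also have "concat (map (blk h) [0..<n]) = [0..<sum_list h]"
      using concat_blk[of n h] n_def by simp
    finally show "mset (concat ws) = mset [0..<sum_list h]" .
  next
    have len: "length (concat (map (blk h) cs)) = (\<Sum>j\<in>set cs. h ! j)" if "cs \<in> set css" for cs
    proof -
      have "length (concat (map (blk h) cs)) = sum_list (map (\<lambda>j. length (blk h j)) cs)"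
        by (simp add: length_concat o_def)
      also have "\<dots> = sum_list (map (\<lambda>j. h ! j) cs)"
        using lt[OF that] n_def by (intro arg_cong[of _ _ sum_list] map_cong refl length_blk) auto
      also have "\<dots> = (\<Sum>j\<in>set cs. h ! j)"
        using distinct_concat_mem[OF css(2) that] by (simp add: sum_list_distinct_conv_sum_set)
      finally show ?thesis .
    qed
    have "mset (map length ws) = mset (map (\<lambda>cs. \<Sum>j\<in>set cs. h ! j) css)"
      unfolding ws_def using len by (simp add: o_def cong: map_cong)
    also have "\<dots> = image_mset (\<lambda>C. \<Sum>i\<in>C. h ! i) (mset (map set css))"
      by (simp add: image_mset.compositionality o_def)
    also have "\<dots> = image_mset (\<lambda>C. \<Sum>i\<in>C. h ! i) (mset_set ((\<lambda>i. orbit \<sigma> i) ` {..<n}))"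
      unfolding css(5) orbit_inv_eq[OF ps] ..
    also have "\<dots> = cycle_partition h \<sigma>" unfolding cycle_partition_def n_def ..
    finally show "mset (map length ws) = cycle_partition h \<sigma>" .
  next
    fix w assume "w \<in> set ws"
    then obtain cs where cs: "cs \<in> set css" "w = concat (map (blk h) cs)" unfolding ws_def by auto
    have "cs \<noteq> []" using css(4) cs(1) by blast
    then obtain j cs' where j: "cs = j # cs'" by (cases cs) auto
    have "j < n" using lt[OF cs(1)] j by simp
    then have "length (blk h j) > 0" using length_blk[of j h] pos n_def by simp
    then show "w \<noteq> []" using cs(2) j by auto
  qed
qed

lemma exists_perm_map:
  "mset ls = mset (map f xs) \<Longrightarrow> \<exists>ys. mset ys = mset xs \<and> map f ys = ls"
proof (induction ls arbitrary: xs)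
  case Nil then show ?case by simp
next
  case (Cons l ls)
  have "l \<in> set (map f xs)" using Cons.prems by (metis list.set_intros(1) set_mset_mset)
  then obtain x where x: "x \<in> set xs" "f x = l" by auto
  have "mset (map f (remove1 x xs)) = image_mset f (mset xs) - {#l#}"
    using x by (simp add: mset_remove1 image_mset_Diff)
  moreover have "mset ls = image_mset f (mset xs) - {#l#}"
    using Cons.prems by (metis add_mset_remove_trivial mset.simps(2) mset_map)
  ultimately have "mset ls = mset (map f (remove1 x xs))" by simp
  then obtain ys where ys: "mset ys = mset (remove1 x xs)" "map f ys = ls" using Cons.IH by blast
  show ?case using ys x by (intro exI[of _ "x # ys"]) auto
qed

lemma sorted_dup:
  "sorted xs \<Longrightarrow> 2 \<le> count (mset xs) m \<Longrightarrow> \<exists>as bs. xs = as @ m # m # bs"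
proof (induction xs)
  case Nil then show ?case by simp
next
  case (Cons x xs)
  show ?case
  proof (cases "x = m")
    case True
    then have "m \<in> set xs" using Cons.prems(2) by (simp split: if_splits)
    then obtain y ys where xs: "xs = y # ys" by (cases xs) auto
    have "y \<le> m" using \<open>m \<in> set xs\<close> Cons.prems(1) xs by auto
    moreover have "x \<le> y" using Cons.prems(1) xs by auto
    ultimately have "y = m" using True by simp
    then show ?thesis using xs True by (intro exI[of _ "[]"] exI[of _ ys]) auto
  next
    case False
    then have "\<exists>as bs. xs = as @ m # m # bs" using Cons by auto
    then show ?thesis by (metis append_Cons)
  qed
qed

theorem mainTheorem5:
  fixes h :: "nat list" and \<sigma> :: "nat \<Rightarrow> nat"
  assumes parts_pos: "\<forall>p\<in>set h. 0 < p"
    and parts_noninc: "sorted_wrt (\<ge>) h"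
    and sigma_perm: "\<sigma> permutes {..<length h}"
  defines "\<mu> \<equiv> cycle_partition h \<sigma>"
  shows "(((\<exists>m\<in>#\<mu>. even m) \<or> (\<exists>m. 2 \<le> count \<mu> m)) \<longrightarrow>
           (\<forall>x :: nat \<Rightarrow> 'a::field_char_0^'d::finite^'d.
              tr_perm (length h) \<sigma> (ST h x) = 0)) \<and>
         (\<not> ((\<exists>m\<in>#\<mu>. even m) \<or> (\<exists>m. 2 \<le> count \<mu> m)) \<longrightarrow>
           (\<exists>s::'a. (s = 1 \<or> s = -1) \<and>
              (\<forall>x :: nat \<Rightarrow> 'a^'d^'d.
                 tr_perm (length h) \<sigma> (ST h x) = s * wedgeT (rev (sorted_list_of_multiset \<mu>)) x)))"
proof -
  define k where "k = sum_list h"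
  obtain ws where W: "\<forall>y::nat \<Rightarrow> 'a^'d^'d.
      tr_perm (length h) \<sigma> (tensor_mats (length h) (\<lambda>j. Xblock h j y)) = TW ws y"
    "mset (concat ws) = mset [0..<k]" "mset (map length ws) = \<mu>" "\<forall>w\<in>set ws. w \<noteq> []"
    using Q_words[OF sigma_perm parts_pos] unfolding \<mu>_def k_def by blast
  define ls where "ls = rev (sorted_list_of_multiset \<mu>)"
  have "mset ls = mset (map length ws)" using W(3) by (simp add: ls_def)
  then obtain ws' where ws': "mset ws' = mset ws" "map length ws' = ls"
    using exists_perm_map by blast
  have c': "mset (concat ws') = mset [0..<k]" using mset_concat_perm[OF ws'(1)] W(2) by simp
  obtain \<pi> where \<pi>: "\<pi> permutes {..<k}"
      "\<forall>y::nat \<Rightarrow> 'a^'d^'d. TW ws' y = TW (std (map length ws') 0) (\<lambda>i. y (\<pi> i))"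
    using relabel[OF c'] by blast
  have sk: "sum_list ls = k"
  proof -
    have "sum_list ls = length (concat ws')" by (simp add: ws'(2)[symmetric] length_concat)
    also have "\<dots> = k" using c' by (metis length_upt minus_nat.diff_0 size_mset)
    finally show ?thesis .
  qed
  have key: "tr_perm (length h) \<sigma> (ST h x) = of_int (sign \<pi>) * Alt k (TW (std ls 0)) x"
    for x :: "nat \<Rightarrow> 'a^'d^'d"
  proof -
    have "tr_perm (length h) \<sigma> (ST h x) = (\<Sum>\<tau> | \<tau> permutes {..<k}.
      of_int (sign \<tau>) * tr_perm (length h) \<sigma> (tensor_mats (length h) (\<lambda>j. Xblock h j (\<lambda>i. x (\<tau> i)))))"
      unfolding k_def by (rule tr_perm_ST)
    also have "\<dots> = (\<Sum>\<tau> | \<tau> permutes {..<k}. of_int (sign \<tau>) * TW ws' (\<lambda>i. x (\<tau> i)))"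
      using W(1) by (simp add: TW_mset[OF ws'(1), symmetric])
    also have "\<dots> = (\<Sum>\<tau> | \<tau> permutes {..<k}. of_int (sign \<tau>) * TW (std ls 0) (\<lambda>i. x (\<tau> (\<pi> i))))"
      using \<pi>(2) ws'(2) by simp
    also have "\<dots> = Alt k (\<lambda>y. TW (std ls 0) (\<lambda>i. y (\<pi> i))) x"
      unfolding Alt_def by simp
    also have "\<dots> = of_int (sign \<pi>) * Alt k (TW (std ls 0)) x"
      by (rule Alt_compose[OF \<pi>(1)])
    finally show ?thesis .
  qed
  have wed: "wedgeT ls x = Alt k (TW (std ls 0)) x" for x :: "nat \<Rightarrow> 'a^'d^'d"
    using wedgeT_Alt[of ls x] sk by simp
  have setls: "set ls = set_mset \<mu>" by (simp add: ls_def)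
  have pos: "m > 0" if "m \<in> set ls" for m
  proof -
    have "m \<in> length ` set ws'" using that ws'(2) by (metis list.set_map)
    then obtain w where "w \<in> set ws'" "m = length w" by blast
    moreover have "set ws' = set ws" using ws'(1) by (metis set_mset_mset)
    ultimately show ?thesis using W(4) by auto
  qed
  have even_case: "Alt k (TW (std ls 0)) x = 0" if "m \<in># \<mu>" "even m" for m and x :: "nat \<Rightarrow> 'a^'d^'d"
  proof -
    have "m \<in> set ls" using that setls by simp
    then obtain as bs where ls: "ls = as @ m # bs" by (meson split_list)
    have "Alt (sum_list (as @ m # bs)) (TW (std (as @ m # bs) 0)) x = 0"
      by (rule Alt_std_even) (use that pos \<open>m \<in> set ls\<close> in auto)
    then show ?thesis using sk ls by simp
  qed
  have vanish: "Alt k (TW (std ls 0)) x = 0"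
    if "(\<exists>m\<in>#\<mu>. even m) \<or> (\<exists>m. 2 \<le> count \<mu> m)" for x :: "nat \<Rightarrow> 'a^'d^'d"
  proof (cases "\<exists>m\<in>#\<mu>. even m")
    case True
    then obtain m where "m \<in># \<mu>" "even m" by blast
    then show ?thesis by (rule even_case)
  next
    case False
    have "\<exists>m. 2 \<le> count \<mu> m" using that False by blast
    then obtain m where m: "2 \<le> count \<mu> m" by blast
    then have "0 < count \<mu> m" by linarith
    then have mm: "m \<in># \<mu>" by (simp only: count_greater_zero_iff)
    have "odd m" using False mm by auto
    have "2 \<le> count (mset (sorted_list_of_multiset \<mu>)) m" using m by simp
    then obtain as bs where sl: "sorted_list_of_multiset \<mu> = as @ m # m # bs"
      using sorted_dup[OF sorted_sorted_list_of_multiset] by blast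
    have ls: "ls = rev bs @ m # m # rev as" unfolding ls_def sl by simp
    have "Alt (sum_list (rev bs @ m # m # rev as)) (TW (std (rev bs @ m # m # rev as) 0)) x = 0"
      by (rule Alt_std_dup) fact
    then show ?thesis using sk ls by simp
  qed
  show ?thesis
  proof (intro conjI impI allI)
    fix x :: "nat \<Rightarrow> 'a^'d^'d"
    assume "(\<exists>m\<in>#\<mu>. even m) \<or> (\<exists>m. 2 \<le> count \<mu> m)"
    then show "tr_perm (length h) \<sigma> (ST h x) = 0" using key vanish by simp
  next
    show "\<exists>s::'a. (s = 1 \<or> s = -1) \<and> (\<forall>x :: nat \<Rightarrow> 'a^'d^'d.
                 tr_perm (length h) \<sigma> (ST h x) = s * wedgeT (rev (sorted_list_of_multiset \<mu>)) x)"
    proof (intro exI[of _ "of_int (sign \<pi>)"] conjI allI)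
      show "(of_int (sign \<pi>) :: 'a) = 1 \<or> of_int (sign \<pi>) = -1"
        by (cases rule: sign_cases[of \<pi>]) auto
      fix x :: "nat \<Rightarrow> 'a^'d^'d"
      show "tr_perm (length h) \<sigma> (ST h x) = of_int (sign \<pi>) * wedgeT (rev (sorted_list_of_multiset \<mu>)) x"
        using key wed unfolding ls_def by simp
    qed
  qed
qed


end
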